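(* Let $n\ge1$ and work in $\mathfrak{gl}(n)$ with the notation of the context. (i) The elements $e_{kl}=(\mathrm{ad}\,Y)^{k-l}(X^k)$, $0\le k\le n-1$, $-k\le l\le k$, form a basis of $\mathfrak{gl}(n)$, and $\langle e_{kl},e_{k'l'}\rangle=0$ unless $k=k'$ and $l+l'=0$. (ii) For each fixed $l$ with $0\le l\le n-1$, the polynomials $f_{kl}$, $l\le k\le n-1$, form an orthogonal basis (of the space of functions on $\{\alpha_{l+1},\dots,\alpha_n\}$, equivalently of polynomials of degree $<n-l$) with respect to the bilinear form $$\langle f,g\rangle_l=\sum_{i=l+1}^n f(\alpha_i)g(\alpha_i)T_1(\alpha_i)\cdots T_l(\alpha_i)$$ (for $l=0$ the product of $T$'s is $1$ and the sum is over $i=1,\dots,n$). (iii) For $0\le l\le k\le n-1$, up to a nonzero constant factor $f_{kl}(H)$ coincides with $${}_3F_2\left(\begin{matrix}l-k,\ l+k+1,\ \tfrac12(1-n-H)\\ l+1,\ l+1-n\end{matrix}\ \Big|\ 1\right).$$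
   Context: $\mathfrak{gl}(n)$ carries the form $\langle A,B\rangle=\mathrm{tr}(AB)$. Use the principal embedding of $\mathfrak{sl}(2)$: $Y=\sum_{i=1}^{n-1}E_{i+1,i}$, $H=\sum_{i=1}^n(n-2i+1)E_{ii}$, $X=\sum_{i=1}^{n-1}i(n-i)E_{i,i+1}$ (so $[X,Y]=H$, $[H,X]=2X$, $[H,Y]=-2Y$). Set $\alpha_i=n-2i+1$ and $T_i(H)=\frac14(n^2-(H+2i-1)^2)$. For a polynomial $f$, $f(H)=\mathrm{diag}(f(\alpha_1),\dots,f(\alpha_n))$. For $0\le l\le k\le n-1$, the polynomials $f_{kl}$ and $f_{k,-l}$ are the unique polynomials of degree $<n-l$ with $(\mathrm{ad}\,Y)^{k-l}(X^k)=X^lf_{kl}(H)$ and $(\mathrm{ad}\,Y)^{k+l}(X^k)=f_{k,-l}(H)Y^l$. The generalized hypergeometric function is ${}_3F_2\left(\begin{matrix}a_1,a_2,a_3\\ b_1,b_2\end{matrix}\,\big|\,z\right)=\sum_{i\ge0}\frac{(a_1)_i(a_2)_i(a_3)_i}{(b_1)_i(b_2)_i}\frac{z^i}{i!}$ with $(a)_0=1$, $(a)_i=a(a+1)\cdots(a+i-1)$. *)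

theory Defs
  imports Complex_Main "HOL-Computational_Algebra.Polynomial"
begin

text \<open>Matrices in gl(n) are represented as functions nat => nat => real, with
  0-based indices; an n x n matrix has all entries outside {0..<n} x {0..<n} zero.
  Row r / column c (0-based) corresponds to row r+1 / column c+1 of the paper.\<close>

type_synonym rmat = "nat \<Rightarrow> nat \<Rightarrow> real"

definition gl :: "nat \<Rightarrow> rmat set" where
  "gl n = {A. \<forall>i j. n \<le> i \<or> n \<le> j \<longrightarrow> A i j = 0}"

definition mmult :: "nat \<Rightarrow> rmat \<Rightarrow> rmat \<Rightarrow> rmat" where
  "mmult n A B = (\<lambda>i j. \<Sum>k<n. A i k * B k j)"

definition mid :: "nat \<Rightarrow> rmat" where
  "mid n = (\<lambda>i j. if i = j \<and> i < n then 1 else 0)"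

definition mpow :: "nat \<Rightarrow> rmat \<Rightarrow> nat \<Rightarrow> rmat" where
  "mpow n A k = (mmult n A ^^ k) (mid n)"

definition mtrace :: "nat \<Rightarrow> rmat \<Rightarrow> real" where
  "mtrace n A = (\<Sum>i<n. A i i)"

definition trform :: "nat \<Rightarrow> rmat \<Rightarrow> rmat \<Rightarrow> real" where
  "trform n A B = mtrace n (mmult n A B)"

definition ad :: "nat \<Rightarrow> rmat \<Rightarrow> rmat \<Rightarrow> rmat" where
  "ad n A B = (\<lambda>i j. mmult n A B i j - mmult n B A i j)"

definition Ymat :: "nat \<Rightarrow> rmat" where
  "Ymat n = (\<lambda>r c. if r = c + 1 \<and> r < n then 1 else 0)"

definition Xmat :: "nat \<Rightarrow> rmat" where
  "Xmat n = (\<lambda>r c. if c = r + 1 \<and> c < n then real (r + 1) * (real n - real (r + 1)) else 0)"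

text \<open>alpha_i = n - 2i + 1, 1-based i\<close>
definition alpha :: "nat \<Rightarrow> nat \<Rightarrow> real" where
  "alpha n i = real n - 2 * real i + 1"

definition Hmat :: "nat \<Rightarrow> rmat" where
  "Hmat n = (\<lambda>r c. if r = c \<and> r < n then alpha n (r + 1) else 0)"

definition funH :: "nat \<Rightarrow> (real \<Rightarrow> real) \<Rightarrow> rmat" where
  "funH n g = (\<lambda>r c. if r = c \<and> r < n then g (alpha n (r + 1)) else 0)"

definition polyH :: "nat \<Rightarrow> real poly \<Rightarrow> rmat" where
  "polyH n f = funH n (poly f)"

definition Tfun :: "nat \<Rightarrow> nat \<Rightarrow> real \<Rightarrow> real" where
  "Tfun n i x = (real n ^ 2 - (x + 2 * real i - 1) ^ 2) / 4"

definition ekl :: "nat \<Rightarrow> nat \<Rightarrow> int \<Rightarrow> rmat" where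
  "ekl n k l = (ad n (Ymat n) ^^ nat (int k - l)) (mpow n (Xmat n) k)"

definition fkl :: "nat \<Rightarrow> nat \<Rightarrow> nat \<Rightarrow> real poly" where
  "fkl n k l = (THE f. degree f < n - l \<and>
      ekl n k (int l) = mmult n (mpow n (Xmat n) l) (polyH n f))"

definition lform :: "nat \<Rightarrow> nat \<Rightarrow> real poly \<Rightarrow> real poly \<Rightarrow> real" where
  "lform n l f g = (\<Sum>i = l + 1..n. poly f (alpha n i) * poly g (alpha n i) *
                      (\<Prod>j = 1..l. Tfun n j (alpha n i)))"

text \<open>Generalized hypergeometric function 3F2 (as the formal series; all uses below
  are terminating).\<close>
definition hyp3F2 :: "real \<Rightarrow> real \<Rightarrow> real \<Rightarrow> real \<Rightarrow> real \<Rightarrow> real \<Rightarrow> real" where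
  "hyp3F2 a1 a2 a3 b1 b2 z = (\<Sum>i. pochhammer a1 i * pochhammer a2 i * pochhammer a3 i
       / (pochhammer b1 i * pochhammer b2 i) * z ^ i / fact i)"

end

theory Submission
  imports Defs
begin


definition matof :: "nat \<Rightarrow> int \<Rightarrow> (real \<Rightarrow> real) \<Rightarrow> rmat" where
  "matof n l f = (\<lambda>i j. if i < n \<and> j < n \<and> int j - int i = l then f (real i) else 0)"

lemma matof_gl: "matof n l f \<in> gl n"
  by (auto simp: matof_def gl_def)

lemma sum_delta_lt: "(\<Sum>t<(n::nat). if t = c then g t else (0::real)) = (if c < n then g c else 0)"
  by (induction n) auto

lemma mmult_X_matof:
  assumes "l \<ge> 0"
  shows "mmult n (Xmat n) (matof n l f) =
     matof n (l + 1) (\<lambda>x. (x + 1) * (real n - x - 1) * f (x + 1))"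
proof (intro ext)
  fix i j
  have "mmult n (Xmat n) (matof n l f) i j =
     (\<Sum>t<n. if t = i + 1 then (if i + 1 < n then real (i + 1) * (real n - real (i + 1)) else 0) * matof n l f t j else 0)"
    unfolding mmult_def by (intro sum.cong) (auto simp: Xmat_def)
  also have "\<dots> = (if i + 1 < n then real (i + 1) * (real n - real (i + 1)) * matof n l f (i+1) j else 0)"
    by (simp add: sum_delta_lt)
  also have "\<dots> = matof n (l + 1) (\<lambda>x. (x + 1) * (real n - x - 1) * f (x + 1)) i j"
    using assms by (auto simp: matof_def algebra_simps)
  finally show "mmult n (Xmat n) (matof n l f) i j = matof n (l + 1) (\<lambda>x. (x + 1) * (real n - x - 1) * f (x + 1)) i j" .
qed

lemma ad_Y_matof:
  assumes "l \<ge> 1 \<Longrightarrow> f (-1) = 0" and "l \<ge> 1 \<Longrightarrow> f (real n - of_int l) = 0"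
  shows "ad n (Ymat n) (matof n l f) = matof n (l - 1) (\<lambda>x. f (x - 1) - f x)"
proof (intro ext)
  fix i j
  have 1: "mmult n (Ymat n) (matof n l f) i j = (if 1 \<le> i \<and> i < n then matof n l f (i - 1) j else 0)"
  proof -
    have "mmult n (Ymat n) (matof n l f) i j =
      (\<Sum>t<n. if t = i - 1 then (if 1 \<le> i \<and> i < n then matof n l f t j else 0) else 0)"
      unfolding mmult_def by (intro sum.cong) (auto simp: Ymat_def matof_def)
    also have "\<dots> = (if 1 \<le> i \<and> i < n then matof n l f (i - 1) j else 0)"
      by (auto simp add: sum_delta_lt)
    finally show ?thesis .
  qed
  have 2: "mmult n (matof n l f) (Ymat n) i j = (if j + 1 < n then matof n l f i (j + 1) else 0)"
  proof -
    have "mmult n (matof n l f) (Ymat n) i j =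
      (\<Sum>t<n. if t = j + 1 then (if j + 1 < n then matof n l f i t else 0) else 0)"
      unfolding mmult_def by (intro sum.cong) (auto simp: Ymat_def matof_def)
    also have "\<dots> = (if j + 1 < n then matof n l f i (j + 1) else 0)"
      by (simp add: sum_delta_lt)
    finally show ?thesis .
  qed
  show "ad n (Ymat n) (matof n l f) i j = matof n (l - 1) (\<lambda>x. f (x - 1) - f x) i j"
  proof (cases "i < n \<and> j < n \<and> int j - int i = l - 1")
    case True
    then have ij: "i < n" "j < n" "int j - int i = l - 1" by auto
    have A: "(if 1 \<le> i \<and> i < n then matof n l f (i - 1) j else 0) = f (real i - 1)"
    proof (cases "i \<ge> 1")
      case True then show ?thesis using ij by (auto simp: matof_def of_nat_diff)
    next
      case False then have "i = 0" by auto
      then show ?thesis using ij assms(1) by (auto simp: matof_def)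
    qed
    have B: "(if j + 1 < n then matof n l f i (j + 1) else 0) = f (real i)"
    proof (cases "j + 1 < n")
      case True then show ?thesis using ij by (auto simp: matof_def)
    next
      case False then have "j + 1 = n" using ij by auto
      then have "l \<ge> 1" "real i = real n - of_int l" using ij by linarith+
      then show ?thesis using False assms(2) by auto
    qed
    show ?thesis unfolding ad_def 1 2 A B using True by (simp add: matof_def)
  next
    case False
    then show ?thesis unfolding ad_def 1 2 by (auto simp: matof_def)
  qed
qed

primrec ak :: "nat \<Rightarrow> nat \<Rightarrow> real poly" where
  "ak n 0 = 1"
| "ak n (Suc M) = [:real (Suc M), 1:] * [:real n - real (Suc M), -1:] * ak n M"

lemma poly_ak_Suc: "poly (ak n (Suc M)) x = (x + real (Suc M)) * (real n - x - real (Suc M)) * poly (ak n M) x"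
  by (simp add: algebra_simps)

declare ak.simps(2)[simp del]

lemma poly_ak_Suc2: "poly (ak n (Suc M)) x = (x + 1) * (real n - x - 1) * poly (ak n M) (x + 1)"
proof (induction M arbitrary: x)
  case 0
  show ?case unfolding poly_ak_Suc by (simp add: algebra_simps)
next
  case (Suc M)
  have "poly (ak n (Suc (Suc M))) x = (x + real (Suc (Suc M))) * (real n - x - real (Suc (Suc M))) * poly (ak n (Suc M)) x"
    by (rule poly_ak_Suc)
  also have "\<dots> = (x + real (Suc (Suc M))) * (real n - x - real (Suc (Suc M))) * ((x + 1) * (real n - x - 1) * poly (ak n M) (x + 1))"
    by (simp add: Suc.IH)
  also have "\<dots> = (x + 1) * (real n - x - 1) * ((x + 1 + real (Suc M)) * (real n - (x + 1) - real (Suc M)) * poly (ak n M) (x + 1))"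
    by (simp add: algebra_simps)
  also have "\<dots> = (x + 1) * (real n - x - 1) * poly (ak n (Suc M)) (x + 1)"
    by (simp only: poly_ak_Suc)
  finally show ?case .
qed

lemma ak_roots: "1 \<le> s \<Longrightarrow> s \<le> k \<Longrightarrow> poly (ak n k) (- real s) = 0 \<and> poly (ak n k) (real n - real s) = 0"
proof (induction k)
  case 0
  then show ?case by simp
next
  case (Suc k)
  show ?case
  proof (cases "s = Suc k")
    case True
    then show ?thesis unfolding poly_ak_Suc by simp
  next
    case False
    then show ?thesis using Suc unfolding poly_ak_Suc by simp
  qed
qed

lemma ak_nonzero_pt: "i + k < n \<Longrightarrow> poly (ak n k) (real i) \<noteq> 0"
proof (induction k)
  case 0
  then show ?case by simp
next
  case (Suc k)
  have "real i + real (Suc k) \<noteq> 0" by simp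
  moreover have "real n - real i - real (Suc k) \<noteq> 0" using Suc.prems by simp
  ultimately show ?case using Suc unfolding poly_ak_Suc by simp
qed

lemma mid_matof: "mid n = matof n 0 (\<lambda>_. 1)"
  by (intro ext) (auto simp: mid_def matof_def)

lemma mpow_X: "mpow n (Xmat n) k = matof n (int k) (poly (ak n k))"
proof (induction k)
  case 0
  then show ?case by (simp add: mpow_def mid_matof)
next
  case (Suc k)
  have "mpow n (Xmat n) (Suc k) = mmult n (Xmat n) (mpow n (Xmat n) k)"
    by (simp add: mpow_def)
  also have "\<dots> = matof n (int k + 1) (\<lambda>x. (x + 1) * (real n - x - 1) * poly (ak n k) (x + 1))"
    unfolding Suc.IH by (rule mmult_X_matof) simp
  also have "\<dots> = matof n (int (Suc k)) (poly (ak n (Suc k)))"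
  proof -
    have "poly (ak n (Suc k)) = (\<lambda>x. (x + 1) * (real n - x - 1) * poly (ak n k) (x + 1))"
      by (rule ext, rule poly_ak_Suc2)
    then show ?thesis by (simp add: add.commute)
  qed
  finally show ?case .
qed

definition Dm :: "real poly \<Rightarrow> real poly" where
  "Dm p = pcompose p [:-1, 1:] - p"

lemma poly_Dm: "poly (Dm p) x = poly p (x - 1) - poly p x"
  by (simp add: Dm_def poly_pcompose algebra_simps)

definition PP :: "nat \<Rightarrow> nat \<Rightarrow> nat \<Rightarrow> real poly" where
  "PP n k j = (Dm ^^ j) (ak n k)"

lemma PP_0: "PP n k 0 = ak n k"
  by (simp add: PP_def)

lemma PP_Suc: "PP n k (Suc j) = Dm (PP n k j)"
  by (simp add: PP_def)

lemma PP_roots: "1 \<le> s \<Longrightarrow> s + j \<le> k \<Longrightarrow>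
   poly (PP n k j) (- real s) = 0 \<and> poly (PP n k j) (real n - real s) = 0"
proof (induction j arbitrary: s)
  case 0
  then show ?case using ak_roots[of s k n] by (simp add: PP_0)
next
  case (Suc j)
  have a: "poly (PP n k j) (- real s) = 0 \<and> poly (PP n k j) (real n - real s) = 0"
    using Suc by simp
  have b: "poly (PP n k j) (- real (Suc s)) = 0 \<and> poly (PP n k j) (real n - real (Suc s)) = 0"
    using Suc.IH[of "Suc s"] Suc.prems by simp
  have c1: "- real s - 1 = - real (Suc s)" by simp
  have c2: "real n - real s - 1 = real n - real (Suc s)" by simp
  show ?case unfolding PP_Suc poly_Dm c1 c2 using a b by simp
qed

lemma adpow_X: "(ad n (Ymat n) ^^ j) (mpow n (Xmat n) k) = matof n (int k - int j) (poly (PP n k j))"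
proof (induction j)
  case 0
  then show ?case by (simp add: mpow_X PP_0)
next
  case (Suc j)
  have "(ad n (Ymat n) ^^ Suc j) (mpow n (Xmat n) k) = ad n (Ymat n) (matof n (int k - int j) (poly (PP n k j)))"
    using Suc.IH by simp
  also have "\<dots> = matof n (int k - int j - 1) (\<lambda>x. poly (PP n k j) (x - 1) - poly (PP n k j) x)"
  proof (rule ad_Y_matof)
    assume h: "1 \<le> int k - int j"
    show "poly (PP n k j) (- 1) = 0" using PP_roots[of 1 j k n] h by simp
  next
    assume h: "1 \<le> int k - int j"
    then have e: "real n - of_int (int k - int j) = real n - real (k - j)" by (simp add: of_nat_diff)
    show "poly (PP n k j) (real n - of_int (int k - int j)) = 0"
      unfolding e using PP_roots[of "k - j" j k n] h by simp
  qed
  also have "\<dots> = matof n (int k - int (Suc j)) (poly (PP n k (Suc j)))"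
  proof -
    have "poly (PP n k (Suc j)) = (\<lambda>x. poly (PP n k j) (x - 1) - poly (PP n k j) x)"
      by (rule ext) (simp add: PP_Suc poly_Dm)
    then show ?thesis by (simp add: algebra_simps)
  qed
  finally show ?case .
qed

lemma ekl_eq: "l \<le> int k \<Longrightarrow> ekl n k l = matof n l (poly (PP n k (nat (int k - l))))"
  unfolding ekl_def adpow_X by simp



definition Dc :: "real \<Rightarrow> real poly \<Rightarrow> real poly" where
  "Dc c p = pcompose p [:c, 1:] - p"

lemma Dm_Dc: "Dm = Dc (-1)"
  by (intro ext) (simp add: Dm_def Dc_def)

lemma poly_Dc: "poly (Dc c p) x = poly p (x + c) - poly p x"
  by (simp add: Dc_def poly_pcompose algebra_simps)

lemma Dc_0 [simp]: "Dc c 0 = 0"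
  by (simp add: Dc_def)

lemma Dc_const: "degree p = 0 \<Longrightarrow> Dc c p = 0"
proof -
  assume "degree p = 0"
  then obtain b where "p = [:b:]" by (metis degree_eq_zeroE)
  then show ?thesis by (simp add: Dc_def)
qed

lemma ag_aux: "((a::'a::ab_group_add) + (s + x)) - (a + y) = (x - y) + s"
  by (simp add: algebra_simps)

lemma Dc_pCons: "Dc c (pCons a q) = pCons 0 (Dc c q) + smult c (pcompose q [:c, 1:])"
proof -
  have "pcompose (pCons a q) [:c, 1:] = [:a:] + (smult c (pcompose q [:c, 1:]) + pCons 0 (pcompose q [:c, 1:]))"
    by (simp add: pcompose_pCons)
  moreover have h2: "[:a:] + pCons 0 q = pCons a q" by simp
  ultimately have "Dc c (pCons a q) = ([:a:] + (smult c (pcompose q [:c, 1:]) + pCons 0 (pcompose q [:c, 1:]))) - ([:a:] + pCons 0 q)"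
    unfolding Dc_def by (simp only: h2)
  also have "\<dots> = (pCons 0 (pcompose q [:c, 1:]) - pCons 0 q) + smult c (pcompose q [:c, 1:])"
    by (rule ag_aux)
  also have "\<dots> = pCons 0 (Dc c q) + smult c (pcompose q [:c, 1:])"
    by (simp add: Dc_def)
  finally show ?thesis .
qed

lemma coeff_shift_deg: "coeff (pcompose q [:c, 1:]) (degree q) = lead_coeff (q::real poly)"
proof (cases "degree q = 0")
  case True
  then obtain b where "q = [:b:]" by (metis degree_eq_zeroE)
  then show ?thesis by simp
next
  case False
  have d: "degree (pcompose q [:c, 1:]) = degree q" by (subst degree_pcompose) simp
  have "lead_coeff (pcompose q [:c, 1:]) = lead_coeff q * lead_coeff [:c, 1:] ^ degree q"
    by (rule lead_coeff_comp) simp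
  then show ?thesis using d by simp
qed

lemma Dc_deg:
  "degree (Dc c p) \<le> degree p - 1 \<and> coeff (Dc c p) (degree p - 1) = of_nat (degree p) * c * lead_coeff p"
proof (induction p)
  case 0
  then show ?case by simp
next
  case (pCons a q)
  show ?case
  proof (cases "q = 0")
    case True
    then show ?thesis by (simp add: Dc_const)
  next
    case False
    let ?e = "degree q"
    have dp: "degree (pCons a q) = Suc ?e" using False by (simp add: degree_pCons_eq)
    have lc: "lead_coeff (pCons a q) = lead_coeff q" using dp by simp
    have ds: "degree (smult c (pcompose q [:c, 1:])) \<le> ?e"
      by (simp add: degree_pcompose)
    have d1: "degree (pCons 0 (Dc c q)) \<le> ?e"
    proof (cases "Dc c q = 0")
      case True then show ?thesis by simp
    next
      case nz: False
      then have "?e \<noteq> 0" using Dc_const by auto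
      moreover have "degree (Dc c q) \<le> ?e - 1" using pCons.IH by blast
      ultimately show ?thesis using nz by (simp add: degree_pCons_eq)
    qed
    have c1: "coeff (pCons 0 (Dc c q)) ?e = of_nat ?e * c * lead_coeff q"
    proof (cases "?e = 0")
      case True then show ?thesis by (simp add: Dc_const)
    next
      case False
      then have "coeff (pCons 0 (Dc c q)) ?e = coeff (Dc c q) (?e - 1)"
        by (simp add: coeff_pCons')
      then show ?thesis using pCons.IH by simp
    qed
    have c2: "coeff (smult c (pcompose q [:c, 1:])) ?e = c * lead_coeff q"
      by (simp add: coeff_shift_deg)
    have "degree (Dc c (pCons a q)) \<le> ?e"
      unfolding Dc_pCons using ds d1 by (simp add: degree_add_le)
    moreover have "coeff (Dc c (pCons a q)) ?e = of_nat (Suc ?e) * c * lead_coeff q"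
      unfolding Dc_pCons coeff_add c1 c2 by (simp add: algebra_simps)
    ultimately show ?thesis using dp lc by simp
  qed
qed

lemma Dc_pow_le: "degree p \<le> m \<Longrightarrow> degree ((Dc c ^^ j) p) \<le> m - j \<and> (m < j \<longrightarrow> (Dc c ^^ j) p = 0)"
proof (induction j)
  case 0
  then show ?case by simp
next
  case (Suc j)
  let ?q = "(Dc c ^^ j) p"
  have IH: "degree ?q \<le> m - j" "m < j \<longrightarrow> ?q = 0" using Suc by auto
  show ?case
  proof (cases "m \<le> j")
    case True
    then have "degree ?q = 0" using IH by simp
    then have "Dc c ?q = 0" by (rule Dc_const)
    then show ?thesis by simp
  next
    case False
    have "degree (Dc c ?q) \<le> degree ?q - 1" using Dc_deg by blast
    then show ?thesis using IH False by simp
  qed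
qed

lemma Dc_pow_exact:
  assumes "c \<noteq> 0" "p \<noteq> 0" "j \<le> degree p"
  shows "degree ((Dc c ^^ j) p) = degree p - j \<and> (Dc c ^^ j) p \<noteq> 0"
  using assms(3)
proof (induction j)
  case 0
  then show ?case using assms by simp
next
  case (Suc j)
  let ?q = "(Dc c ^^ j) p"
  have IH: "degree ?q = degree p - j" "?q \<noteq> 0" using Suc by auto
  have pos: "degree ?q \<ge> 1" using IH Suc.prems by simp
  have cq: "coeff (Dc c ?q) (degree ?q - 1) = of_nat (degree ?q) * c * lead_coeff ?q"
    using Dc_deg by blast
  have "lead_coeff ?q \<noteq> 0" using IH(2) by simp
  moreover have "of_nat (degree ?q) \<noteq> (0::real)" using pos by simp
  ultimately have "of_nat (degree ?q) * c * lead_coeff ?q \<noteq> 0" using assms(1) by simp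
  then have nz: "coeff (Dc c ?q) (degree ?q - 1) \<noteq> 0" using cq by simp
  then have "degree ?q - 1 \<le> degree (Dc c ?q)" by (rule le_degree)
  moreover have "degree (Dc c ?q) \<le> degree ?q - 1" using Dc_deg by blast
  moreover have "Dc c ?q \<noteq> 0" using nz by auto
  ultimately show ?case using IH by simp
qed

lemma ak_deg: "ak n k \<noteq> 0 \<and> degree (ak n k) = 2 * k"
proof (induction k)
  case 0
  then show ?case by simp
next
  case (Suc k)
  have f1: "[:real (Suc k), 1:] \<noteq> 0" "degree [:real (Suc k), 1:] = 1" by auto
  have f2: "[:real n - real (Suc k), -1:] \<noteq> 0" "degree [:real n - real (Suc k), -1:] = 1" by auto
  define F where "F = [:real (Suc k), 1:] * [:real n - real (Suc k), -1:]"
  have F1: "F \<noteq> 0" unfolding F_def using f1 f2 by (simp only: mult_eq_0_iff) simp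
  have F2: "degree F = 2"
    unfolding F_def using f1 f2 by (subst degree_mult_eq) auto
  have e: "ak n (Suc k) = F * ak n k" by (simp only: F_def ak.simps(2))
  show ?case unfolding e using Suc F1 F2 by (simp add: degree_mult_eq)
qed

lemma PP_Dc: "PP n k j = (Dc (-1) ^^ j) (ak n k)"
  by (simp add: PP_def Dm_Dc)

lemma PP_exact: "j \<le> 2 * k \<Longrightarrow> degree (PP n k j) = 2 * k - j \<and> PP n k j \<noteq> 0"
  unfolding PP_Dc using Dc_pow_exact[of "-1" "ak n k" j] ak_deg[of n k] by simp

lemma PP_zero: "2 * k < j \<Longrightarrow> PP n k j = 0"
  unfolding PP_Dc using Dc_pow_le[where p="ak n k" and m="2 * k" and c="-1" and j=j] ak_deg[of n k] by simp



primrec GG :: "nat \<Rightarrow> nat \<Rightarrow> nat \<Rightarrow> real poly" where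
  "GG n k 0 = 1"
| "GG n k (Suc m) = [:0, real n, -1:] * pcompose (GG n k m) [:-1, 1:]
     - [:real (k - m), 1:] * [:real n - real (k - m), -1:] * GG n k m"

lemma poly_GG_Suc: "poly (GG n k (Suc m)) x = x * (real n - x) * poly (GG n k m) (x - 1)
   - (x + real (k - m)) * (real n - x - real (k - m)) * poly (GG n k m) x"
  by (simp add: poly_pcompose algebra_simps)

declare GG.simps(2)[simp del]

lemma GG_rel_pt: "m \<le> k \<Longrightarrow> poly (ak n (k - m)) x * poly (GG n k m) x = poly (PP n k m) x"
proof (induction m arbitrary: x)
  case 0
  then show ?case by (simp add: PP_0)
next
  case (Suc m)
  define L' where "L' = k - Suc m"
  have L: "k - m = Suc L'" using Suc.prems unfolding L'_def by simp
  have a1: "poly (ak n (k - m)) (x - 1) = x * (real n - x) * poly (ak n L') x"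
    unfolding L poly_ak_Suc2 by (simp add: algebra_simps)
  have a2: "poly (ak n (k - m)) x = (x + real (k - m)) * (real n - x - real (k - m)) * poly (ak n L') x"
    unfolding L poly_ak_Suc by simp
  have "poly (PP n k (Suc m)) x = poly (PP n k m) (x - 1) - poly (PP n k m) x"
    by (simp add: PP_Suc poly_Dm)
  also have "\<dots> = poly (ak n (k - m)) (x - 1) * poly (GG n k m) (x - 1) - poly (ak n (k - m)) x * poly (GG n k m) x"
    using Suc by simp
  also have "\<dots> = poly (ak n L') x * poly (GG n k (Suc m)) x"
    unfolding a1 a2 poly_GG_Suc by (simp add: algebra_simps)
  finally show ?case unfolding L'_def by simp
qed

lemma GG_rel: "m \<le> k \<Longrightarrow> ak n (k - m) * GG n k m = PP n k m"
  using GG_rel_pt[of m k n] by (simp add: poly_eq_poly_eq_iff[symmetric] fun_eq_iff)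

lemma GG_deg: "m \<le> k \<Longrightarrow> GG n k m \<noteq> 0 \<and> degree (GG n k m) = m"
proof -
  assume mk: "m \<le> k"
  have pp: "degree (PP n k m) = 2 * k - m" "PP n k m \<noteq> 0" using PP_exact[of m k n] mk by auto
  have g: "GG n k m \<noteq> 0" using pp(2) GG_rel[OF mk, of n] by auto
  have a: "ak n (k - m) \<noteq> 0" "degree (ak n (k - m)) = 2 * (k - m)" using ak_deg by auto
  have "degree (PP n k m) = 2 * (k - m) + degree (GG n k m)"
    using GG_rel[OF mk, of n] a g by (metis degree_mult_eq)
  then show ?thesis using pp g mk by simp
qed

subsection \<open>Generic polynomial facts\<close>

lemma indep_deg:
  fixes F :: "nat \<Rightarrow> real poly"
  assumes "\<forall>k\<in>{a..<b}. F k \<noteq> 0 \<and> degree (F k) = k - a"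
    and "(\<Sum>k\<in>{a..<b}. smult (c k) (F k)) = 0"
  shows "\<forall>k\<in>{a..<b}. c k = 0"
  using assms
proof (induction b)
  case 0
  then show ?case by simp
next
  case (Suc b)
  show ?case
  proof (cases "a \<le> b")
    case False
    then have "{a..<Suc b} = {}" by auto
    then show ?thesis by simp
  next
    case True
    have s: "(\<Sum>k\<in>{a..<Suc b}. smult (c k) (F k)) = (\<Sum>k\<in>{a..<b}. smult (c k) (F k)) + smult (c b) (F b)"
      using True by (rule sum.atLeastLessThan_Suc)
    have co: "coeff (\<Sum>k\<in>{a..<b}. smult (c k) (F k)) (b - a) = 0"
    proof -
      have "\<forall>k\<in>{a..<b}. coeff (smult (c k) (F k)) (b - a) = 0"
      proof
        fix k assume k: "k \<in> {a..<b}"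
        then have "degree (F k) < b - a" using Suc.prems(1) by auto
        then show "coeff (smult (c k) (F k)) (b - a) = 0" by (simp add: coeff_eq_0)
      qed
      then show ?thesis unfolding coeff_sum by (intro sum.neutral) blast
    qed
    have Fb: "F b \<noteq> 0" "degree (F b) = b - a" using Suc.prems(1) True by auto
    have "coeff (\<Sum>k\<in>{a..<Suc b}. smult (c k) (F k)) (b - a) = c b * lead_coeff (F b)"
      unfolding s coeff_add co using Fb by simp
    moreover have "coeff (F b) (b - a) \<noteq> 0" using Fb by (metis leading_coeff_0_iff)
    ultimately have cb: "c b = 0" using Suc.prems(2) Fb(1) by simp
    then have "(\<Sum>k\<in>{a..<b}. smult (c k) (F k)) = 0" using Suc.prems(2) s by simp
    then have "\<forall>k\<in>{a..<b}. c k = 0" using Suc.IH Suc.prems(1) by auto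
    then show ?thesis using cb by (auto simp: less_Suc_eq)
  qed
qed

lemma span_deg:
  fixes F :: "nat \<Rightarrow> real poly"
  assumes "\<forall>k\<in>{a..<b}. F k \<noteq> 0 \<and> degree (F k) = k - a"
    and "degree p < b - a \<or> p = 0"
  shows "\<exists>c. p = (\<Sum>k\<in>{a..<b}. smult (c k) (F k))"
  using assms
proof (induction b arbitrary: p)
  case 0
  then show ?case by (intro exI[of _ "\<lambda>_. 0"]) simp
next
  case (Suc b)
  show ?case
  proof (cases "a \<le> b")
    case False
    then have "p = 0" using Suc.prems(2) by auto
    then show ?thesis by (intro exI[of _ "\<lambda>_. 0"]) simp
  next
    case True
    have Fb: "F b \<noteq> 0" "degree (F b) = b - a" using Suc.prems(1) True by auto
    define cb where "cb = coeff p (b - a) / lead_coeff (F b)"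
    define p' where "p' = p - smult cb (F b)"
    have dp: "degree p \<le> b - a" using Suc.prems(2) True by auto
    have d': "degree p' \<le> b - a" unfolding p'_def using dp Fb
      by (intro degree_diff_le) (auto intro: order.trans[OF degree_smult_le])
    have lc: "coeff (F b) (b - a) \<noteq> 0" using Fb by (metis leading_coeff_0_iff)
    have c': "coeff p' (b - a) = 0" unfolding p'_def cb_def using Fb lc by simp
    have "degree p' < b - a \<or> p' = 0"
    proof (cases "p' = 0")
      case False
      then have "degree p' \<noteq> b - a" using c' by (metis leading_coeff_0_iff)
      then show ?thesis using d' by simp
    qed simp
    then obtain c where c: "p' = (\<Sum>k\<in>{a..<b}. smult (c k) (F k))"
      using Suc.IH Suc.prems(1) by auto
    define c2 where "c2 = c(b := cb)"
    have "(\<Sum>k\<in>{a..<b}. smult (c2 k) (F k)) = (\<Sum>k\<in>{a..<b}. smult (c k) (F k))"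
      unfolding c2_def by (intro sum.cong) auto
    then have "p = (\<Sum>k\<in>{a..<b}. smult (c2 k) (F k)) + smult (c2 b) (F b)"
      using c unfolding p'_def c2_def by simp
    also have "\<dots> = (\<Sum>k\<in>{a..<Suc b}. smult (c2 k) (F k))"
      using True by (simp add: sum.atLeastLessThan_Suc)
    finally show ?thesis by blast
  qed
qed

lemma poly_zero_pts:
  fixes p :: "real poly"
  assumes "finite S" "degree p < card S" "\<forall>x\<in>S. poly p x = 0"
  shows "p = 0"
proof (rule ccontr)
  assume nz: "p \<noteq> 0"
  have "S \<subseteq> {x. poly p x = 0}" using assms(3) by auto
  then have "card S \<le> card {x. poly p x = 0}"
    using poly_roots_finite[OF nz] by (rule card_mono[rotated])
  also have "\<dots> \<le> degree p" by (rule card_poly_roots_bound[OF nz])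
  finally show False using assms(2) by simp
qed

lemma degree_lin_prod: "finite S \<Longrightarrow> degree (\<Prod>y\<in>S. [:-y, 1::real:]) = card S"
  by (subst degree_prod_eq_sum_degree) auto

lemma interp:
  fixes v :: "real \<Rightarrow> real"
  assumes "finite S"
  shows "\<exists>p. (p = 0 \<or> degree p < card S) \<and> (\<forall>x\<in>S. poly p x = v x)"
  using assms
proof (induction S rule: finite_induct)
  case empty
  then show ?case by auto
next
  case (insert x S)
  obtain p where p: "p = 0 \<or> degree p < card S" "\<forall>y\<in>S. poly p y = v y" using insert.IH by blast
  define Pi where "Pi = (\<Prod>y\<in>S. [:-y, 1::real:])"
  have dPi: "degree Pi = card S" unfolding Pi_def using insert.hyps(1) by (rule degree_lin_prod)
  have pPi: "poly Pi z = (\<Prod>y\<in>S. z - y)" for z unfolding Pi_def by (simp add: poly_prod)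
  have Pix: "poly Pi x \<noteq> 0" unfolding pPi using insert.hyps by (simp add: prod_zero_iff)
  have PiS: "y \<in> S \<Longrightarrow> poly Pi y = 0" for y unfolding pPi using insert.hyps(1)
    by (simp add: prod_zero_iff)
  define q where "q = p + smult ((v x - poly p x) / poly Pi x) Pi"
  have "degree q \<le> card S"
    unfolding q_def using p(1) dPi
    by (intro degree_add_le) (auto intro: order.trans[OF degree_smult_le])
  then have "degree q < card (insert x S)" using insert.hyps by simp
  moreover have "\<forall>y\<in>insert x S. poly q y = v y"
    unfolding q_def using p(2) PiS Pix by auto
  ultimately show ?case by blast
qed



subsection \<open>Trace form\<close>

lemma mmult_assoc: "mmult n (mmult n A B) C = mmult n A (mmult n B C)"
proof (intro ext)
  fix i j
  have "mmult n (mmult n A B) C i j = (\<Sum>s<n. \<Sum>t<n. A i t * B t s * C s j)"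
    unfolding mmult_def by (simp add: sum_distrib_right)
  also have "\<dots> = (\<Sum>t<n. \<Sum>s<n. A i t * B t s * C s j)" by (rule sum.swap)
  also have "\<dots> = mmult n A (mmult n B C) i j"
    unfolding mmult_def by (simp add: sum_distrib_left mult.assoc)
  finally show "mmult n (mmult n A B) C i j = mmult n A (mmult n B C) i j" .
qed

lemma trace_comm: "mtrace n (mmult n A B) = mtrace n (mmult n B A)"
proof -
  have "mtrace n (mmult n A B) = (\<Sum>i<n. \<Sum>t<n. A i t * B t i)"
    unfolding mtrace_def mmult_def by simp
  also have "\<dots> = (\<Sum>t<n. \<Sum>i<n. B t i * A i t)"
    by (subst sum.swap) (simp add: mult.commute)
  also have "\<dots> = mtrace n (mmult n B A)"
    unfolding mtrace_def mmult_def by simp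
  finally show ?thesis .
qed

lemma trform_comm: "trform n A B = trform n B A"
  unfolding trform_def by (rule trace_comm)

lemma trace_diff_left: "mtrace n (mmult n (\<lambda>i j. P i j - Q i j) B) = mtrace n (mmult n P B) - mtrace n (mmult n Q B)"
  unfolding mtrace_def mmult_def by (simp add: left_diff_distrib sum_subtractf)

lemma trace_diff_right: "mtrace n (mmult n B (\<lambda>i j. P i j - Q i j)) = mtrace n (mmult n B P) - mtrace n (mmult n B Q)"
  unfolding mtrace_def mmult_def by (simp add: right_diff_distrib sum_subtractf)

lemma trform_ad: "trform n (ad n Y A) B = - trform n A (ad n Y B)"
proof -
  have 1: "mtrace n (mmult n (mmult n Y A) B) = mtrace n (mmult n A (mmult n B Y))"
  proof -
    have "mtrace n (mmult n (mmult n Y A) B) = mtrace n (mmult n Y (mmult n A B))"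
      by (simp add: mmult_assoc)
    also have "\<dots> = mtrace n (mmult n (mmult n A B) Y)" by (rule trace_comm)
    also have "\<dots> = mtrace n (mmult n A (mmult n B Y))" by (simp add: mmult_assoc)
    finally show ?thesis .
  qed
  have 2: "mtrace n (mmult n (mmult n A Y) B) = mtrace n (mmult n A (mmult n Y B))"
    by (simp add: mmult_assoc)
  show ?thesis
    unfolding trform_def ad_def trace_diff_left trace_diff_right 1 2 by simp
qed

lemma trform_adpow: "trform n ((ad n Y ^^ a) A) B = (-1) ^ a * trform n A ((ad n Y ^^ a) B)"
proof (induction a arbitrary: B)
  case 0
  then show ?case by simp
next
  case (Suc a)
  have "trform n ((ad n Y ^^ Suc a) A) B = - trform n ((ad n Y ^^ a) A) (ad n Y B)"
    by (simp add: trform_ad)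
  also have "\<dots> = - ((-1) ^ a * trform n A ((ad n Y ^^ a) (ad n Y B)))"
    by (simp add: Suc.IH)
  also have "(ad n Y ^^ a) (ad n Y B) = (ad n Y ^^ Suc a) B"
    by (simp add: funpow_Suc_right del: funpow.simps)
  finally show ?case by simp
qed

lemma trform_matof: "l + l' \<noteq> 0 \<Longrightarrow> trform n (matof n l f) (matof n l' g) = 0"
  unfolding trform_def mtrace_def mmult_def matof_def by (intro sum.neutral ballI) auto

lemma trform_zero: "trform n A (\<lambda>i j. 0) = 0"
  unfolding trform_def mtrace_def mmult_def by simp

lemma matof_zero: "matof n l (\<lambda>_. 0) = (\<lambda>i j. 0)"
  unfolding matof_def by (intro ext) simp

lemma trform_ekl_lt:
  assumes "k' < k" "l \<le> int k" "l' \<le> int k'" "l + l' = 0" "- int k' \<le> l'"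
  shows "trform n (ekl n k l) (ekl n k' l') = 0"
proof -
  define a where "a = nat (int k - l)"
  define b where "b = nat (int k' - l')"
  have "trform n (ekl n k l) (ekl n k' l') =
     (-1) ^ a * trform n (mpow n (Xmat n) k) ((ad n (Ymat n) ^^ a) ((ad n (Ymat n) ^^ b) (mpow n (Xmat n) k')))"
    unfolding ekl_def a_def b_def by (rule trform_adpow)
  also have "(ad n (Ymat n) ^^ a) ((ad n (Ymat n) ^^ b) (mpow n (Xmat n) k')) = (ad n (Ymat n) ^^ (a + b)) (mpow n (Xmat n) k')"
    by (simp add: funpow_add)
  also have "\<dots> = matof n (int k' - int (a + b)) (poly (PP n k' (a + b)))"
    by (rule adpow_X)
  also have "PP n k' (a + b) = 0"
    using assms unfolding a_def b_def by (intro PP_zero) linarith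
  finally show ?thesis by (simp add: matof_zero trform_zero)
qed

lemma trform_ekl:
  assumes "k < n" "- int k \<le> l" "l \<le> int k" "k' < n" "- int k' \<le> l'" "l' \<le> int k'"
    and "\<not> (k = k' \<and> l + l' = 0)"
  shows "trform n (ekl n k l) (ekl n k' l') = 0"
proof (cases "l + l' = 0")
  case False
  then show ?thesis using assms by (simp add: ekl_eq trform_matof)
next
  case True
  then have "k \<noteq> k'" using assms by auto
  then consider "k' < k" | "k < k'" by linarith
  then show ?thesis
  proof cases
    case 1
    then show ?thesis using assms True by (intro trform_ekl_lt) auto
  next
    case 2
    have "trform n (ekl n k' l') (ekl n k l) = 0" using 2 assms True by (intro trform_ekl_lt) auto
    then show ?thesis by (simp add: trform_comm)
  qed
qed



definition Sidx :: "nat \<Rightarrow> (nat \<times> int) set" where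
  "Sidx n = {(k, l). k < n \<and> - int k \<le> l \<and> l \<le> int k}"

definition Bp :: "nat \<Rightarrow> nat \<Rightarrow> int \<Rightarrow> real poly" where
  "Bp n k l = (if 0 \<le> l then GG n k (nat (int k - l)) else PP n k (nat (int k - l)))"

definition wt :: "nat \<Rightarrow> int \<Rightarrow> real \<Rightarrow> real" where
  "wt n l x = (if 0 \<le> l then poly (ak n (nat l)) x else 1)"

lemma finite_Sidx: "finite (Sidx n)"
proof -
  have "Sidx n \<subseteq> {..<n} \<times> {- int n..int n}" unfolding Sidx_def by auto
  then show ?thesis by (rule finite_subset) auto
qed

lemma ekl_Bp:
  assumes "- int k \<le> l" "l \<le> int k"
  shows "ekl n k l = matof n l (\<lambda>x. wt n l x * poly (Bp n k l) x)"
proof (cases "0 \<le> l")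
  case True
  define m where "m = nat (int k - l)"
  have m: "m \<le> k" "k - m = nat l" using True assms unfolding m_def by auto
  have "poly (PP n k m) = (\<lambda>x. wt n l x * poly (Bp n k l) x)"
    using GG_rel_pt[OF m(1), of n] True m(2) unfolding wt_def Bp_def m_def by (auto simp: fun_eq_iff)
  then show ?thesis using assms unfolding m_def by (simp add: ekl_eq)
next
  case False
  then show ?thesis using assms by (simp add: ekl_eq wt_def Bp_def)
qed

lemma Bp_deg:
  assumes "- int k \<le> l" "l \<le> int k"
  shows "Bp n k l \<noteq> 0 \<and> degree (Bp n k l) = k - nat \<bar>l\<bar>"
proof (cases "0 \<le> l")
  case True
  then show ?thesis using GG_deg[of "nat (int k - l)" k n] assms by (simp add: Bp_def)
next
  case False
  have "nat (int k - l) \<le> 2 * k" using assms by linarith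
  then have "degree (PP n k (nat (int k - l))) = 2 * k - nat (int k - l) \<and> PP n k (nat (int k - l)) \<noteq> 0"
    by (rule PP_exact)
  moreover have "2 * k - nat (int k - l) = k - nat \<bar>l\<bar>" using False assms by linarith
  ultimately show ?thesis using False by (simp add: Bp_def)
qed

definition Rows :: "nat \<Rightarrow> int \<Rightarrow> nat set" where
  "Rows n l = {i. i < n \<and> 0 \<le> int i + l \<and> int i + l < int n}"

lemma wt_nz: "i \<in> Rows n l \<Longrightarrow> wt n l (real i) \<noteq> 0"
  unfolding wt_def Rows_def by (auto intro!: ak_nonzero_pt)

lemma card_Rows: "\<bar>l\<bar> < int n \<Longrightarrow> card (real ` Rows n l) = n - nat \<bar>l\<bar>"
proof -
  assume h: "\<bar>l\<bar> < int n"
  have "Rows n l = {nat (- l)..<nat (int n - l)} \<inter> {..<n}"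
    unfolding Rows_def by auto
  also have "\<dots> = {nat (- l)..<min n (nat (int n - l))}" by auto
  finally have e: "Rows n l = {nat (- l)..<min n (nat (int n - l))}" .
  have "card (real ` Rows n l) = card (Rows n l)" by (rule card_image) (simp add: inj_on_def)
  also have "\<dots> = n - nat \<bar>l\<bar>" unfolding e using h by auto
  finally show ?thesis .
qed

lemma sum_Sidx_restrict:
  assumes "\<bar>l0\<bar> < int n" "\<And>p. p \<in> Sidx n \<Longrightarrow> snd p \<noteq> l0 \<Longrightarrow> g p = 0"
  shows "sum g (Sidx n) = (\<Sum>k\<in>{nat \<bar>l0\<bar>..<n}. g (k, l0))"
proof -
  have "sum g (Sidx n) = sum g {p \<in> Sidx n. snd p = l0}"
    using assms(2) finite_Sidx by (intro sum.mono_neutral_right) auto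
  also have "{p \<in> Sidx n. snd p = l0} = (\<lambda>k. (k, l0)) ` {nat \<bar>l0\<bar>..<n}"
  proof (intro set_eqI iffI)
    fix p assume "p \<in> {p \<in> Sidx n. snd p = l0}"
    then show "p \<in> (\<lambda>k. (k, l0)) ` {nat \<bar>l0\<bar>..<n}"
      unfolding Sidx_def by (cases p) (auto simp: image_iff)
  next
    fix p assume "p \<in> (\<lambda>k. (k, l0)) ` {nat \<bar>l0\<bar>..<n}"
    then show "p \<in> {p \<in> Sidx n. snd p = l0}"
      unfolding Sidx_def by auto
  qed
  also have "sum g \<dots> = (\<Sum>k\<in>{nat \<bar>l0\<bar>..<n}. g (k, l0))"
    by (subst sum.reindex) (auto simp: inj_on_def)
  finally show ?thesis .
qed

lemma entry_sum:
  assumes "i < n" "j < n"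
  shows "(\<Sum>p\<in>Sidx n. c p * ekl n (fst p) (snd p) i j) =
     wt n (int j - int i) (real i) * poly (\<Sum>k\<in>{nat \<bar>int j - int i\<bar>..<n}. smult (c (k, int j - int i)) (Bp n k (int j - int i))) (real i)"
proof -
  define l where "l = int j - int i"
  have al: "\<bar>l\<bar> < int n" using assms unfolding l_def by linarith
  have "(\<Sum>p\<in>Sidx n. c p * ekl n (fst p) (snd p) i j) = (\<Sum>k\<in>{nat \<bar>l\<bar>..<n}. (\<lambda>p. c p * ekl n (fst p) (snd p) i j) (k, l))"
  proof (rule sum_Sidx_restrict[OF al])
    fix p assume p: "p \<in> Sidx n" "snd p \<noteq> l"
    then show "c p * ekl n (fst p) (snd p) i j = 0"
      unfolding Sidx_def l_def by (cases p) (auto simp: ekl_Bp matof_def)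
  qed
  also have "\<dots> = (\<Sum>k\<in>{nat \<bar>l\<bar>..<n}. c (k, l) * ekl n k l i j)" by simp
  also have "\<dots> = (\<Sum>k\<in>{nat \<bar>l\<bar>..<n}. wt n l (real i) * (c (k, l) * poly (Bp n k l) (real i)))"
  proof (intro sum.cong refl)
    fix k assume "k \<in> {nat \<bar>l\<bar>..<n}"
    then have "- int k \<le> l" "l \<le> int k" by auto
    then show "c (k, l) * ekl n k l i j = wt n l (real i) * (c (k, l) * poly (Bp n k l) (real i))"
      using assms by (simp add: ekl_Bp matof_def l_def)
  qed
  also have "\<dots> = wt n l (real i) * poly (\<Sum>k\<in>{nat \<bar>l\<bar>..<n}. smult (c (k, l)) (Bp n k l)) (real i)"
    by (simp add: poly_sum sum_distrib_left)
  finally show ?thesis unfolding l_def .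
qed

lemma Bp_family: "\<forall>k\<in>{nat \<bar>l\<bar>..<n}. Bp n k l \<noteq> 0 \<and> degree (Bp n k l) = k - nat \<bar>l\<bar>"
  using Bp_deg by auto

lemma basis_indep:
  assumes h: "(\<lambda>i j. \<Sum>p\<in>Sidx n. c p * ekl n (fst p) (snd p) i j) = (\<lambda>i j. 0)"
    and p: "p \<in> Sidx n"
  shows "c p = 0"
proof -
  obtain k0 l where p': "p = (k0, l)" by (cases p)
  have k0: "k0 < n" "- int k0 \<le> l" "l \<le> int k0" using p p' unfolding Sidx_def by auto
  have al: "\<bar>l\<bar> < int n" using k0 by linarith
  define Q where "Q = (\<Sum>k\<in>{nat \<bar>l\<bar>..<n}. smult (c (k, l)) (Bp n k l))"
  have zero: "\<forall>x\<in>real ` Rows n l. poly Q x = 0"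
  proof
    fix x assume "x \<in> real ` Rows n l"
    then obtain i where i: "i \<in> Rows n l" "x = real i" by auto
    define j where "j = nat (int i + l)"
    have ij: "i < n" "j < n" "int j - int i = l" using i unfolding Rows_def j_def by auto
    from fun_cong[OF fun_cong[OF h, of i], of j]
    have e0: "(\<Sum>p\<in>Sidx n. c p * ekl n (fst p) (snd p) i j) = 0" by simp
    have "wt n l (real i) * poly Q (real i) = 0"
      using entry_sum[OF ij(1,2), of c] e0 unfolding Q_def ij(3) by simp
    then show "poly Q x = 0" using wt_nz[OF i(1)] i(2) by simp
  qed
  have dQ: "degree Q < card (real ` Rows n l)"
  proof -
    have "degree Q \<le> n - nat \<bar>l\<bar> - 1"
      unfolding Q_def using Bp_family[of l n]
      by (intro degree_sum_le) (auto intro: order.trans[OF degree_smult_le])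
    then show ?thesis using card_Rows[OF al] al by linarith
  qed
  have "Q = 0" by (rule poly_zero_pts[OF _ dQ zero]) (simp add: Rows_def)
  then have "\<forall>k\<in>{nat \<bar>l\<bar>..<n}. c (k, l) = 0"
    using indep_deg[OF Bp_family[of l n], of "\<lambda>k. c (k, l)"] unfolding Q_def by simp
  then show ?thesis using p' k0 by auto
qed

lemma basis_span:
  assumes A: "A \<in> gl n"
  shows "\<exists>c. A = (\<lambda>i j. \<Sum>p\<in>Sidx n. c p * ekl n (fst p) (snd p) i j)"
proof -
  define v where "v l x = A (nat \<lfloor>x\<rfloor>) (nat (\<lfloor>x\<rfloor> + l)) / wt n l x" for l x
  have "\<forall>l. \<exists>cl. \<bar>l\<bar> < int n \<longrightarrow>
     (\<forall>i\<in>Rows n l. poly (\<Sum>k\<in>{nat \<bar>l\<bar>..<n}. smult (cl k) (Bp n k l)) (real i) = v l (real i))"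
  proof
    fix l
    show "\<exists>cl. \<bar>l\<bar> < int n \<longrightarrow>
     (\<forall>i\<in>Rows n l. poly (\<Sum>k\<in>{nat \<bar>l\<bar>..<n}. smult (cl k) (Bp n k l)) (real i) = v l (real i))"
    proof (cases "\<bar>l\<bar> < int n")
      case True
      obtain q where q: "q = 0 \<or> degree q < card (real ` Rows n l)" "\<forall>x\<in>real ` Rows n l. poly q x = v l x"
        using interp[of "real ` Rows n l" "v l"] by (auto simp: Rows_def)
      have "degree q < n - nat \<bar>l\<bar> \<or> q = 0" using q(1) card_Rows[OF True] by auto
      then obtain cl where "q = (\<Sum>k\<in>{nat \<bar>l\<bar>..<n}. smult (cl k) (Bp n k l))"
        using span_deg[OF Bp_family[of l n]] by blast
      then show ?thesis using q(2) by auto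
    qed simp
  qed
  from choice[OF this] obtain C where C0: "\<forall>l. \<bar>l\<bar> < int n \<longrightarrow>
     (\<forall>i\<in>Rows n l. poly (\<Sum>k\<in>{nat \<bar>l\<bar>..<n}. smult (C l k) (Bp n k l)) (real i) = v l (real i))"
    by blast
  have C: "\<And>l. \<bar>l\<bar> < int n \<Longrightarrow>
     (\<forall>i\<in>Rows n l. poly (\<Sum>k\<in>{nat \<bar>l\<bar>..<n}. smult (C l k) (Bp n k l)) (real i) = v l (real i))"
    using C0 by blast
  define c where "c p = C (snd p) (fst p)" for p
  have "A = (\<lambda>i j. \<Sum>p\<in>Sidx n. c p * ekl n (fst p) (snd p) i j)"
  proof (intro ext)
    fix i j
    show "A i j = (\<Sum>p\<in>Sidx n. c p * ekl n (fst p) (snd p) i j)"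
    proof (cases "i < n \<and> j < n")
      case True
      define l where "l = int j - int i"
      have al: "\<bar>l\<bar> < int n" using True unfolding l_def by linarith
      have iR: "i \<in> Rows n l" using True unfolding Rows_def l_def by auto
      have "(\<Sum>p\<in>Sidx n. c p * ekl n (fst p) (snd p) i j) =
         wt n l (real i) * poly (\<Sum>k\<in>{nat \<bar>l\<bar>..<n}. smult (C l k) (Bp n k l)) (real i)"
        using entry_sum[OF True[THEN conjunct1] True[THEN conjunct2], of c] unfolding c_def l_def by simp
      also have "\<dots> = wt n l (real i) * v l (real i)" using C[OF al] iR by simp
      also have "\<dots> = A i j"
        using wt_nz[OF iR] unfolding v_def l_def by simp
      finally show ?thesis by simp
    next
      case False
      then have "A i j = 0" using A unfolding gl_def by auto
      moreover have "(\<Sum>p\<in>Sidx n. c p * ekl n (fst p) (snd p) i j) = 0"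
        using False by (intro sum.neutral ballI) (auto simp: Sidx_def ekl_eq matof_def)
      ultimately show ?thesis by simp
    qed
  qed
  then show ?thesis by blast
qed



definition fk :: "nat \<Rightarrow> nat \<Rightarrow> nat \<Rightarrow> real poly" where
  "fk n k l = pcompose (GG n k (k - l)) [:(real n - 2 * real l - 1) / 2, - 1 / 2:]"

lemma poly_fk: "poly (fk n k l) x = poly (GG n k (k - l)) ((real n - 2 * real l - 1) / 2 - x / 2)"
  by (simp add: fk_def poly_pcompose algebra_simps)

lemma fk_deg: "l \<le> k \<Longrightarrow> fk n k l \<noteq> 0 \<and> degree (fk n k l) = k - l"
proof -
  assume lk: "l \<le> k"
  have g: "GG n k (k - l) \<noteq> 0" "degree (GG n k (k - l)) = k - l" using GG_deg[of "k - l" k n] by auto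
  have d1: "degree [:(real n - 2 * real l - 1) / 2, - 1 / 2 :: real:] = 1" by simp
  have "degree (fk n k l) = k - l" unfolding fk_def by (subst degree_pcompose) (simp add: g)
  moreover have "fk n k l \<noteq> 0"
  proof
    assume "fk n k l = 0"
    then have "GG n k (k - l) = 0" unfolding fk_def by (rule pcompose_eq_0) (simp only: d1)
    then show False using g(1) by simp
  qed
  ultimately show ?thesis by simp
qed

lemma arg_simp: "(real n - 2 * real l - 1) / 2 - (real n - 2 * (x + real l) - 1) / 2 = (x::real)"
  by (simp add: field_simps)

lemma mmult_matof_polyH: "mmult n (matof n l g) (polyH n f) =
   matof n l (\<lambda>x. g x * poly f (real n - 2 * (x + of_int l) - 1))"
proof (intro ext)
  fix i j
  have "mmult n (matof n l g) (polyH n f) i j = (\<Sum>t<n. if t = j then (if j < n then matof n l g i t * poly f (alpha n (j + 1)) else 0) else 0)"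
    unfolding mmult_def polyH_def funH_def by (intro sum.cong) auto
  also have "\<dots> = (if j < n then matof n l g i j * poly f (alpha n (j + 1)) else 0)"
    by (simp add: sum_delta_lt)
  also have "\<dots> = matof n l (\<lambda>x. g x * poly f (real n - 2 * (x + of_int l) - 1)) i j"
  proof (cases "i < n \<and> j < n \<and> int j - int i = l")
    case True
    then have "real j = real i + of_int l" by (metis of_int_diff of_int_of_nat_eq add_diff_cancel_left' diff_add_cancel)
    then have "alpha n (j + 1) = real n - 2 * (real i + of_int l) - 1" by (simp add: alpha_def)
    then show ?thesis using True by (simp add: matof_def)
  next
    case False
    then show ?thesis by (auto simp: matof_def)
  qed
  finally show "mmult n (matof n l g) (polyH n f) i j = matof n l (\<lambda>x. g x * poly f (real n - 2 * (x + of_int l) - 1)) i j" .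
qed

lemma matof_eq_pt:
  assumes "matof n l f = matof n l g" "i < n" "0 \<le> int i + l" "int i + l < int n"
  shows "f (real i) = g (real i)"
proof -
  define j where "j = nat (int i + l)"
  have j: "j < n" "int j - int i = l" using assms unfolding j_def by auto
  have "matof n l f i j = matof n l g i j" using assms(1) by simp
  then show ?thesis using assms(2) j by (simp add: matof_def)
qed

lemma fkl_eq:
  assumes "l \<le> k" "k < n"
  shows "fkl n k l = fk n k l"
  unfolding fkl_def
proof (rule the_equality)
  have e1: "ekl n k (int l) = matof n (int l) (\<lambda>x. poly (ak n l) x * poly (GG n k (k - l)) x)"
    using assms by (simp add: ekl_Bp wt_def Bp_def nat_diff_distrib)
  have e2: "mmult n (mpow n (Xmat n) l) (polyH n (fk n k l)) =
     matof n (int l) (\<lambda>x. poly (ak n l) x * poly (GG n k (k - l)) x)"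
    unfolding mpow_X mmult_matof_polyH poly_fk of_int_of_nat_eq arg_simp by (rule refl)
  show "degree (fk n k l) < n - l \<and> ekl n k (int l) = mmult n (mpow n (Xmat n) l) (polyH n (fk n k l))"
    using fk_deg[OF assms(1), of n] assms e1 e2 by simp
next
  fix f
  assume h: "degree f < n - l \<and> ekl n k (int l) = mmult n (mpow n (Xmat n) l) (polyH n f)"
  have e1: "ekl n k (int l) = matof n (int l) (\<lambda>x. poly (ak n l) x * poly (fk n k l) (real n - 2 * (x + real l) - 1))"
    unfolding poly_fk arg_simp using assms by (simp add: ekl_Bp wt_def Bp_def nat_diff_distrib)
  have e2: "mmult n (mpow n (Xmat n) l) (polyH n f) =
     matof n (int l) (\<lambda>x. poly (ak n l) x * poly f (real n - 2 * (x + real l) - 1))"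
    unfolding mpow_X mmult_matof_polyH by simp
  define S where "S = (\<lambda>i. real n - 2 * (real i + real l) - 1) ` {..<n - l}"
  have cS: "card S = n - l" unfolding S_def by (subst card_image) (auto simp: inj_on_def)
  have z: "\<forall>x\<in>S. poly (f - fk n k l) x = 0"
  proof
    fix x assume "x \<in> S"
    then obtain i where i: "i < n - l" "x = real n - 2 * (real i + real l) - 1" unfolding S_def by auto
    have M: "matof n (int l) (\<lambda>x. poly (ak n l) x * poly (fk n k l) (real n - 2 * (x + real l) - 1)) =
       matof n (int l) (\<lambda>x. poly (ak n l) x * poly f (real n - 2 * (x + real l) - 1))"
      using h e1 e2 by simp
    have "(\<lambda>x. poly (ak n l) x * poly (fk n k l) (real n - 2 * (x + real l) - 1)) (real i) =
       (\<lambda>x. poly (ak n l) x * poly f (real n - 2 * (x + real l) - 1)) (real i)"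
      by (rule matof_eq_pt[OF M]) (use i in auto)
    then have "poly (ak n l) (real i) * poly (fk n k l) x = poly (ak n l) (real i) * poly f x"
      using i(2) by simp
    moreover have "poly (ak n l) (real i) \<noteq> 0" using i by (intro ak_nonzero_pt) simp
    ultimately show "poly (f - fk n k l) x = 0" by simp
  qed
  have "degree (f - fk n k l) \<le> n - l - 1"
    using h fk_deg[OF assms(1), of n] assms by (intro degree_diff_le) auto
  then have "degree (f - fk n k l) < card S" using cS assms by simp
  then have "f - fk n k l = 0" using z by (intro poly_zero_pts[of S]) (auto simp: S_def)
  then show "f = fk n k l" by simp
qed



lemma Tprod: "(\<Prod>j\<in>{1..l}. Tfun n j (real n - 2 * (x + real l) - 1)) = poly (ak n l) x"
proof (induction l arbitrary: x)
  case 0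
  then show ?case by simp
next
  case (Suc l)
  have "(\<Prod>j\<in>{1..Suc l}. Tfun n j (real n - 2 * (x + real (Suc l)) - 1)) =
     (\<Prod>j\<in>{1..l}. Tfun n j (real n - 2 * ((x + 1) + real l) - 1)) * Tfun n (Suc l) (real n - 2 * (x + real (Suc l)) - 1)"
    by (simp add: algebra_simps)
  also have "\<dots> = poly (ak n l) (x + 1) * ((x + 1) * (real n - x - 1))"
    unfolding Suc.IH by (simp add: Tfun_def field_simps power2_eq_square)
  also have "\<dots> = poly (ak n (Suc l)) x" by (simp add: poly_ak_Suc2)
  finally show ?case .
qed

lemma lform_sym: "lform n l f g = lform n l g f"
  unfolding lform_def by (intro sum.cong refl) (simp add: ac_simps)

lemma sum_reindex_l: "(\<Sum>i = l + 1..(n::nat). h i) = (\<Sum>r<n - l. h (r + l + 1))"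
  by (rule sum.reindex_bij_witness[of _ "\<lambda>r. r + l + 1" "\<lambda>i. i - l - 1"]) auto

lemma lform_PP:
  assumes "l \<le> k" "k < n" "l \<le> k'" "k' < n"
  shows "lform n l (fkl n k l) (fkl n k' l) = (\<Sum>r<n - l. poly (PP n k (k - l)) (real r) * poly (GG n k' (k' - l)) (real r))"
proof -
  have "lform n l (fkl n k l) (fkl n k' l) = (\<Sum>r<n - l. poly (fk n k l) (alpha n (r + l + 1)) * poly (fk n k' l) (alpha n (r + l + 1)) *
        (\<Prod>j = 1..l. Tfun n j (alpha n (r + l + 1))))"
    unfolding lform_def fkl_eq[OF assms(1,2)] fkl_eq[OF assms(3,4)] by (rule sum_reindex_l)
  also have "\<dots> = (\<Sum>r<n - l. poly (PP n k (k - l)) (real r) * poly (GG n k' (k' - l)) (real r))"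
  proof (intro sum.cong refl)
    fix r
    have a: "alpha n (r + l + 1) = real n - 2 * (real r + real l) - 1" by (simp add: alpha_def)
    have "poly (PP n k (k - l)) (real r) = poly (ak n l) (real r) * poly (GG n k (k - l)) (real r)"
      using GG_rel_pt[of "k - l" k n "real r"] assms by simp
    then show "poly (fk n k l) (alpha n (r + l + 1)) * poly (fk n k' l) (alpha n (r + l + 1)) *
        (\<Prod>j = 1..l. Tfun n j (alpha n (r + l + 1))) = poly (PP n k (k - l)) (real r) * poly (GG n k' (k' - l)) (real r)"
      unfolding a poly_fk arg_simp Tprod by simp
  qed
  finally show ?thesis .
qed

lemma sbp_step:
  fixes p q :: "real \<Rightarrow> real"
  assumes "p (-1) = 0" "p (real N) = 0"
  shows "(\<Sum>r<Suc N. (p (real r - 1) - p (real r)) * q (real r)) = (\<Sum>r<N. p (real r) * (q (real r + 1) - q (real r)))"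
proof -
  have 1: "(\<Sum>r<Suc N. p (real r - 1) * q (real r)) = (\<Sum>r<N. p (real r) * q (real r + 1))"
    by (subst sum.lessThan_Suc_shift) (simp add: assms(1) add.commute)
  have 2: "(\<Sum>r<Suc N. p (real r) * q (real r)) = (\<Sum>r<N. p (real r) * q (real r))"
    using assms(2) by simp
  have "(\<Sum>r<Suc N. (p (real r - 1) - p (real r)) * q (real r)) =
     (\<Sum>r<Suc N. p (real r - 1) * q (real r)) - (\<Sum>r<Suc N. p (real r) * q (real r))"
    by (simp add: left_diff_distrib sum_subtractf)
  also have "\<dots> = (\<Sum>r<N. p (real r) * (q (real r + 1) - q (real r)))"
    unfolding 1 2 by (simp add: right_diff_distrib sum_subtractf)
  finally show ?thesis .
qed

lemma sbp:
  assumes "j \<le> k" "k \<le> n"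
  shows "(\<Sum>r<n - k + j. poly (PP n k j) (real r) * poly q (real r)) =
         (\<Sum>r<n - k. poly (ak n k) (real r) * poly ((Dc 1 ^^ j) q) (real r))"
  using assms(1)
proof (induction j arbitrary: q)
  case 0
  then show ?case by (simp add: PP_0)
next
  case (Suc j)
  define N where "N = n - k + j"
  have NS: "n - k + Suc j = Suc N" unfolding N_def using assms by simp
  have r1: "poly (PP n k j) (-1) = 0" using PP_roots[of 1 j k n] Suc.prems by simp
  have r2: "poly (PP n k j) (real N) = 0"
  proof -
    have "real N = real n - real (k - j)" unfolding N_def using assms Suc.prems by (simp add: of_nat_diff)
    then show ?thesis using PP_roots[of "k - j" j k n] Suc.prems by simp
  qed
  have "(\<Sum>r<n - k + Suc j. poly (PP n k (Suc j)) (real r) * poly q (real r)) =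
     (\<Sum>r<Suc N. (poly (PP n k j) (real r - 1) - poly (PP n k j) (real r)) * poly q (real r))"
    unfolding NS by (simp add: PP_Suc poly_Dm)
  also have "\<dots> = (\<Sum>r<N. poly (PP n k j) (real r) * (poly q (real r + 1) - poly q (real r)))"
    by (rule sbp_step[of "poly (PP n k j)", OF r1 r2])
  also have "\<dots> = (\<Sum>r<N. poly (PP n k j) (real r) * poly (Dc 1 q) (real r))"
    by (simp add: poly_Dc)
  also have "\<dots> = (\<Sum>r<n - k. poly (ak n k) (real r) * poly ((Dc 1 ^^ j) (Dc 1 q)) (real r))"
    unfolding N_def using Suc by simp
  also have "(Dc 1 ^^ j) (Dc 1 q) = (Dc 1 ^^ Suc j) q"
    by (simp add: funpow_Suc_right del: funpow.simps)
  finally show ?case .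
qed

lemma lform_orth_lt:
  assumes "l \<le> k'" "k' < k" "k < n"
  shows "lform n l (fkl n k l) (fkl n k' l) = 0"
proof -
  have "lform n l (fkl n k l) (fkl n k' l) = (\<Sum>r<n - k + (k - l). poly (PP n k (k - l)) (real r) * poly (GG n k' (k' - l)) (real r))"
    using assms by (subst lform_PP) auto
  also have "\<dots> = (\<Sum>r<n - k. poly (ak n k) (real r) * poly ((Dc 1 ^^ (k - l)) (GG n k' (k' - l))) (real r))"
    using assms by (intro sbp) auto
  also have "(Dc 1 ^^ (k - l)) (GG n k' (k' - l)) = 0"
    using Dc_pow_le[where p = "GG n k' (k' - l)" and m = "k' - l" and c = 1 and j = "k - l"]
      GG_deg[of "k' - l" k' n] assms by auto
  finally show ?thesis by simp
qed

lemma lform_orth: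
  assumes "l \<le> k" "l \<le> k'" "k < n" "k' < n" "k \<noteq> k'"
  shows "lform n l (fkl n k l) (fkl n k' l) = 0"
proof (cases "k' < k")
  case True
  then show ?thesis using assms by (intro lform_orth_lt) auto
next
  case False
  then have "k < k'" using assms by simp
  then have "lform n l (fkl n k' l) (fkl n k l) = 0" using assms by (intro lform_orth_lt) auto
  then show ?thesis by (simp add: lform_sym)
qed



definition Acoef :: "nat \<Rightarrow> nat \<Rightarrow> nat \<Rightarrow> nat \<Rightarrow> real" where
  "Acoef n L m i = pochhammer (- real m) i * pochhammer (2 * real L + real m + 1) i /
     (pochhammer (real L + 1) i * pochhammer (real L + 1 - real n) i) / fact i"

definition Fs :: "nat \<Rightarrow> nat \<Rightarrow> nat \<Rightarrow> real \<Rightarrow> real" where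
  "Fs n L m u = (\<Sum>i<m + 2. Acoef n L m i * pochhammer u i)"

lemma Acoef_zero: "m < i \<Longrightarrow> Acoef n L m i = 0"
  unfolding Acoef_def by (simp add: pochhammer_of_nat_eq_0_lemma)

lemma Acoef_0: "Acoef n L m 0 = 1"
  unfolding Acoef_def by simp

lemma term_id:
  fixes u Lr nr :: real
  shows "(u + nr - Lr) * (Lr - u) * pochhammer u i + u * (u + nr) * pochhammer (u + 1) i =
    (2 * Lr + real i) * pochhammer u (Suc i) + (real i + Lr) * (nr - Lr - real i) * pochhammer u i"
proof -
  have e: "u * pochhammer (u + 1) i = pochhammer u i * (u + real i)"
    using pochhammer_rec[of u i] pochhammer_Suc[of u i] by simp
  have "u * (u + nr) * pochhammer (u + 1) i = (u + nr) * (pochhammer u i * (u + real i))"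
    by (simp add: e[symmetric] ac_simps)
  then show ?thesis by (simp add: pochhammer_Suc algebra_simps)
qed

lemma aux_field1:
  fixes X Y Z W F L n m :: real
  assumes "Z \<noteq> 0" "W \<noteq> 0" "F \<noteq> 0" "L \<noteq> 0" "L - n \<noteq> 0" "m + 1 \<noteq> 0"
  shows "L * (n - L) * ((- (m + 1)) * X * ((2 * L + m) * Y) / (L * Z * ((L - n) * W)) / (F * (m + 1)))
     = X * Y / (Z * W) / F * (2 * L + m)"
proof -
  define D where "D = L * (L - n) * (m + 1)"
  have D: "D \<noteq> 0" unfolding D_def using assms by simp
  have "L * (n - L) * ((- (m + 1)) * X * ((2 * L + m) * Y) / (L * Z * ((L - n) * W)) / (F * (m + 1)))
      = (D * (X * Y * (2 * L + m))) / (D * (Z * W * F))"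
    unfolding D_def by (simp add: algebra_simps)
  also have "\<dots> = X * Y * (2 * L + m) / (Z * W * F)"
    using D by (rule nonzero_mult_divide_mult_cancel_left)
  also have "\<dots> = X * Y / (Z * W) / F * (2 * L + m)" by simp
  finally show ?thesis .
qed

lemma aux_rat:
  fixes L n m t :: real
  assumes "L \<noteq> 0" "L - n \<noteq> 0" "L + 1 + t \<noteq> 0" "L + 1 - n + t \<noteq> 0" "t + 1 \<noteq> 0"
  shows "(2 * L + t) + ((- m + t) * (2 * L + m + 1 + t) / ((L + 1 + t) * (L + 1 - n + t) * (t + 1))) * ((t + 1 + L) * (n - L - (t + 1)))
     = L * (n - L) * ((- (m + 1)) * (2 * L + m) / (L * (L - n) * (t + 1)))"
proof -
  define D where "D = (L + 1 + t) * (L + 1 - n + t)"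
  have D: "D \<noteq> 0" unfolding D_def using assms by simp
  have c1: "(t + 1 + L) * (n - L - (t + 1)) = - D" unfolding D_def by (simp add: algebra_simps)
  have 1: "((- m + t) * (2 * L + m + 1 + t) / ((L + 1 + t) * (L + 1 - n + t) * (t + 1))) * ((t + 1 + L) * (n - L - (t + 1)))
     = - ((- m + t) * (2 * L + m + 1 + t)) / (t + 1)"
  proof -
    define N where "N = (- m + t) * (2 * L + m + 1 + t)"
    have "N / (D * (t + 1)) * (- D) = - ((N * D) / ((t + 1) * D))" by (simp add: ac_simps)
    also have "(N * D) / ((t + 1) * D) = N / (t + 1)" using D by (rule nonzero_mult_divide_mult_cancel_right)
    finally have "N / (D * (t + 1)) * (- D) = - N / (t + 1)" by simp
    then show ?thesis unfolding c1 D_def[symmetric] N_def by simp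
  qed
  define E where "E = L * (L - n)"
  have E: "E \<noteq> 0" unfolding E_def using assms by simp
  have e1: "L * (n - L) * (- (m + 1)) = E * (m + 1)" unfolding E_def by (simp add: algebra_simps)
  have 2: "L * (n - L) * ((- (m + 1)) * (2 * L + m) / (L * (L - n) * (t + 1))) = (m + 1) * (2 * L + m) / (t + 1)"
  proof -
    have "L * (n - L) * ((- (m + 1)) * (2 * L + m) / (L * (L - n) * (t + 1))) = (L * (n - L) * (- (m + 1))) * (2 * L + m) / (E * (t + 1))"
      unfolding E_def by (simp add: algebra_simps)
    also have "\<dots> = E * ((m + 1) * (2 * L + m)) / (E * (t + 1))" unfolding e1 by (simp add: algebra_simps)
    also have "\<dots> = (m + 1) * (2 * L + m) / (t + 1)" using E by simp
    finally show ?thesis .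
  qed
  have 3: "(2 * L + t) + - ((- m + t) * (2 * L + m + 1 + t)) / (t + 1) = (m + 1) * (2 * L + m) / (t + 1)"
    using assms(5) by (simp add: field_simps)
  show ?thesis unfolding 1 2 using 3 by simp
qed

lemma coef_id:
  assumes "1 \<le> L" "L + m < n"
  shows "Acoef n L m t * (2 * real L + real t) + Acoef n L m (Suc t) * ((real (Suc t) + real L) * (real n - real L - real (Suc t)))
     = real L * (real n - real L) * Acoef n (L - 1) (Suc m) (Suc t)"
proof (cases "m < t")
  case True
  then show ?thesis by (simp add: Acoef_zero)
next
  case False
  then have tm: "t \<le> m" by simp
  define X where "X = pochhammer (- real m) t"
  define Y where "Y = pochhammer (2 * real L + real m + 1) t"
  define Z where "Z = pochhammer (real L + 1) t"
  define W where "W = pochhammer (real L + 1 - real n) t"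
  define F where "F = (fact t :: real)"
  have Z: "Z \<noteq> 0" unfolding Z_def pochhammer_eq_0_iff
  proof
    assume "\<exists>k<t. real L + 1 = - real k"
    then obtain j where "real L + 1 = - real j" by auto
    moreover have "real j \<ge> 0" "real L \<ge> 0" by auto
    ultimately show False by linarith
  qed
  have W: "W \<noteq> 0" unfolding W_def pochhammer_eq_0_iff
  proof
    assume "\<exists>k<t. real L + 1 - real n = - real k"
    then obtain j where "j < t" "real L + 1 - real n = - real j" by auto
    then show False using tm assms by linarith
  qed
  have F: "F \<noteq> 0" unfolding F_def by simp
  have A0: "Acoef n L m t = X * Y / (Z * W) / F"
    unfolding Acoef_def X_def Y_def Z_def W_def F_def by simp
  have A1: "Acoef n L m (Suc t) = X * (- real m + real t) * (Y * (2 * real L + real m + 1 + real t)) /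
      (Z * (real L + 1 + real t) * (W * (real L + 1 - real n + real t))) / (F * (real t + 1))"
    unfolding Acoef_def X_def Y_def Z_def W_def F_def by (simp add: pochhammer_Suc algebra_simps)
  have B1: "Acoef n (L - 1) (Suc m) (Suc t) = (- real (Suc m)) * X * ((2 * real L + real m) * Y) /
      (real L * Z * ((real L - real n) * W)) / (F * (real t + 1))"
  proof -
    have L1: "real (L - 1) = real L - 1" using assms by (simp add: of_nat_diff)
    have p1: "pochhammer (- real (Suc m)) (Suc t) = - real (Suc m) * X"
      unfolding pochhammer_rec X_def by (simp add: algebra_simps)
    have p2: "pochhammer (2 * real (L - 1) + real (Suc m) + 1) (Suc t) = (2 * real L + real m) * Y"
      unfolding pochhammer_rec Y_def L1 by (simp add: algebra_simps)
    have p3: "pochhammer (real (L - 1) + 1) (Suc t) = real L * Z"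
      unfolding pochhammer_rec Z_def L1 by (simp add: algebra_simps)
    have p4: "pochhammer (real (L - 1) + 1 - real n) (Suc t) = (real L - real n) * W"
      unfolding pochhammer_rec W_def L1 by (simp add: algebra_simps)
    show ?thesis unfolding Acoef_def p1 p2 p3 p4 F_def by (simp add: algebra_simps)
  qed
  have Lpos: "real L \<noteq> 0" "real L - real n \<noteq> 0" "real L + 1 + real t \<noteq> 0" "real t + 1 \<noteq> 0"
    using assms by auto
  show ?thesis
  proof (cases "real L + 1 - real n + real t = 0")
    case True
    then have tm': "t = m" using tm assms by linarith
    then have "Acoef n L m (Suc t) = 0" unfolding A1 by simp
    moreover have "real L * (real n - real L) * Acoef n (L - 1) (Suc m) (Suc t) = X * Y / (Z * W) / F * (2 * real L + real t)"
    proof -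
      have m1: "real m + 1 \<noteq> 0" by simp
      have B1m: "Acoef n (L - 1) (Suc m) (Suc t) = (- (real m + 1)) * X * ((2 * real L + real m) * Y) /
         (real L * Z * ((real L - real n) * W)) / (F * (real m + 1))"
        unfolding B1 using tm' by (simp add: add.commute)
      have "real L * (real n - real L) * Acoef n (L - 1) (Suc m) (Suc t) = X * Y / (Z * W) / F * (2 * real L + real m)"
        unfolding B1m by (rule aux_field1[OF Z W F Lpos(1) Lpos(2) m1])
      then show ?thesis using tm' by simp
    qed
    ultimately show ?thesis unfolding A0 by simp
  next
    case False
    define K where "K = X * Y / (Z * W) / F"
    have A1': "Acoef n L m (Suc t) = K * ((- real m + real t) * (2 * real L + real m + 1 + real t) /
        ((real L + 1 + real t) * (real L + 1 - real n + real t) * (real t + 1)))"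
      unfolding A1 K_def by (simp add: divide_inverse inverse_mult_distrib ac_simps)
    have B1': "Acoef n (L - 1) (Suc m) (Suc t) = K * ((- (real m + 1)) * (2 * real L + real m) / (real L * (real L - real n) * (real t + 1)))"
      unfolding B1 K_def by (simp add: divide_inverse inverse_mult_distrib ac_simps)
    have R: "(2 * real L + real t) + ((- real m + real t) * (2 * real L + real m + 1 + real t) /
        ((real L + 1 + real t) * (real L + 1 - real n + real t) * (real t + 1))) * ((real t + 1 + real L) * (real n - real L - (real t + 1)))
     = real L * (real n - real L) * ((- (real m + 1)) * (2 * real L + real m) / (real L * (real L - real n) * (real t + 1)))"
      by (rule aux_rat) (use Lpos False in auto)
    have "Acoef n L m t * (2 * real L + real t) + Acoef n L m (Suc t) * ((real (Suc t) + real L) * (real n - real L - real (Suc t)))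
       = K * ((2 * real L + real t) + ((- real m + real t) * (2 * real L + real m + 1 + real t) /
        ((real L + 1 + real t) * (real L + 1 - real n + real t) * (real t + 1))) * ((real t + 1 + real L) * (real n - real L - (real t + 1))))"
    proof -
      have A0': "Acoef n L m t = K" unfolding A0 K_def by simp
      show ?thesis unfolding A1' A0' by (simp only: distrib_left mult.assoc of_nat_Suc add.commute)
    qed
    also have "\<dots> = K * (real L * (real n - real L) * ((- (real m + 1)) * (2 * real L + real m) / (real L * (real L - real n) * (real t + 1))))"
      unfolding R ..
    also have "\<dots> = real L * (real n - real L) * Acoef n (L - 1) (Suc m) (Suc t)"
      unfolding B1' by (simp add: ac_simps)
    finally show ?thesis .
  qed
qed



lemma Fs_id:
  assumes "1 \<le> L" "L + m < n"
  shows "(u + real n - real L) * (real L - u) * Fs n L m u + u * (u + real n) * Fs n L m (u + 1)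
     = real L * (real n - real L) * Fs n (L - 1) (Suc m) u"
proof -
  define A where "A = Acoef n L m"
  define B where "B = Acoef n (L - 1) (Suc m)"
  define g where "g i = A i * ((2 * real L + real i) * pochhammer u (Suc i))" for i
  define h where "h i = A i * ((real i + real L) * (real n - real L - real i) * pochhammer u i)" for i
  have "(u + real n - real L) * (real L - u) * Fs n L m u + u * (u + real n) * Fs n L m (u + 1)
     = (\<Sum>i<m + 2. A i * ((u + real n - real L) * (real L - u) * pochhammer u i + u * (u + real n) * pochhammer (u + 1) i))"
    unfolding Fs_def A_def by (simp add: sum_distrib_left sum.distrib[symmetric] algebra_simps)
  also have "\<dots> = (\<Sum>i<m + 2. g i + h i)"
  proof (intro sum.cong refl)
    fix i
    have e: "(u + real n - real L) * (real L - u) * pochhammer u i + u * (u + real n) * pochhammer (u + 1) i =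
      (2 * real L + real i) * pochhammer u (Suc i) + (real i + real L) * (real n - real L - real i) * pochhammer u i"
      by (rule term_id)
    show "A i * ((u + real n - real L) * (real L - u) * pochhammer u i + u * (u + real n) * pochhammer (u + 1) i) = g i + h i"
      unfolding g_def h_def e by (simp only: distrib_left)
  qed
  also have "\<dots> = (\<Sum>i<m + 2. g i) + (\<Sum>i<m + 2. h i)" by (rule sum.distrib)
  also have "(\<Sum>i<m + 2. h i) = h 0 + (\<Sum>i<m + 2. h (Suc i))"
  proof -
    have "(\<Sum>i<m + 2. h i) = h 0 + (\<Sum>i<m + 1. h (Suc i))"
      using sum.lessThan_Suc_shift[of h "m + 1"] by simp
    moreover have "(\<Sum>i<m + 2. h (Suc i)) = (\<Sum>i<m + 1. h (Suc i))"
    proof -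
      have "h (Suc (m + 1)) = 0" unfolding h_def A_def by (simp add: Acoef_zero)
      then show ?thesis by simp
    qed
    ultimately show ?thesis by simp
  qed
  also have "h 0 = real L * (real n - real L)" unfolding h_def A_def by (simp add: Acoef_0)
  also have "(\<Sum>i<m + 2. g i) + (real L * (real n - real L) + (\<Sum>i<m + 2. h (Suc i)))
     = real L * (real n - real L) + (\<Sum>i<m + 2. g i + h (Suc i))"
    by (simp add: sum.distrib)
  also have "(\<Sum>i<m + 2. g i + h (Suc i)) = (\<Sum>i<m + 2. real L * (real n - real L) * (B (Suc i) * pochhammer u (Suc i)))"
  proof (intro sum.cong refl)
    fix i
    have "g i + h (Suc i) = (A i * (2 * real L + real i) + A (Suc i) * ((real (Suc i) + real L) * (real n - real L - real (Suc i)))) * pochhammer u (Suc i)"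
      unfolding g_def h_def by (simp add: algebra_simps)
    also have "\<dots> = real L * (real n - real L) * B (Suc i) * pochhammer u (Suc i)"
      unfolding A_def B_def coef_id[OF assms] ..
    finally show "g i + h (Suc i) = real L * (real n - real L) * (B (Suc i) * pochhammer u (Suc i))" by simp
  qed
  also have "real L * (real n - real L) + \<dots> = real L * (real n - real L) * Fs n (L - 1) (Suc m) u"
  proof -
    have "Fs n (L - 1) (Suc m) u = (\<Sum>i<Suc (m + 2). B i * pochhammer u i)"
      unfolding Fs_def B_def by simp
    also have "\<dots> = B 0 * pochhammer u 0 + (\<Sum>i<m + 2. B (Suc i) * pochhammer u (Suc i))"
      by (rule sum.lessThan_Suc_shift)
    also have "B 0 * pochhammer u 0 = 1" unfolding B_def by (simp add: Acoef_0)
    finally show ?thesis by (simp add: sum_distrib_left distrib_left)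
  qed
  finally show ?thesis .
qed

lemma GG_hyp:
  assumes "m \<le> k" "k < n"
  shows "\<exists>c. c \<noteq> 0 \<and> (\<forall>x. poly (GG n k m) x = c * Fs n (k - m) m (x + real (k - m) + 1 - real n))"
  using assms(1)
proof (induction m)
  case 0
  have "Fs n k 0 u = 1" for u
  proof -
    have "Acoef n k 0 1 = 0" by (simp add: Acoef_zero)
    then show ?thesis unfolding Fs_def by (simp add: Acoef_0 numeral_2_eq_2)
  qed
  then show ?case by (intro exI[of _ 1]) simp
next
  case (Suc m)
  obtain c where c: "c \<noteq> 0" "\<And>x. poly (GG n k m) x = c * Fs n (k - m) m (x + real (k - m) + 1 - real n)"
    using Suc by auto
  define L where "L = k - m"
  have L: "1 \<le> L" "L + m < n" "k - Suc m = L - 1" "real (L - 1) = real L - 1"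
    using Suc.prems assms unfolding L_def by (auto simp: of_nat_diff)
  have "\<forall>x. poly (GG n k (Suc m)) x = (c * (real L * (real n - real L))) * Fs n (k - Suc m) (Suc m) (x + real (k - Suc m) + 1 - real n)"
  proof
    fix x
    define u where "u = x + real L - real n"
    have "poly (GG n k (Suc m)) x = x * (real n - x) * poly (GG n k m) (x - 1)
       - (x + real L) * (real n - x - real L) * poly (GG n k m) x"
      unfolding poly_GG_Suc L_def ..
    also have "\<dots> = c * ((u + real n - real L) * (real L - u) * Fs n L m u + u * (u + real n) * Fs n L m (u + 1))"
    proof -
      have "x - 1 + real L + 1 - real n = u" unfolding u_def by simp
      moreover have "x + real L + 1 - real n = u + 1" unfolding u_def by simp
      ultimately show ?thesis unfolding c(2) L_def[symmetric] u_def by (simp add: algebra_simps)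
    qed
    also have "\<dots> = c * (real L * (real n - real L)) * Fs n (L - 1) (Suc m) u"
      unfolding Fs_id[OF L(1,2)] by simp
    also have "u = x + real (k - Suc m) + 1 - real n" unfolding u_def L(3) L(4) by simp
    finally show "poly (GG n k (Suc m)) x = (c * (real L * (real n - real L))) * Fs n (k - Suc m) (Suc m) (x + real (k - Suc m) + 1 - real n)"
      unfolding L(3) .
  qed
  moreover have "c * (real L * (real n - real L)) \<noteq> 0" using c(1) L by auto
  ultimately show ?case by blast
qed

lemma hyp_Fs:
  assumes "l \<le> k"
  shows "hyp3F2 (real l - real k) (real l + real k + 1) y (real l + 1) (real l + 1 - real n) 1 = Fs n l (k - l) y"
proof -
  have a1: "real l - real k = - real (k - l)" using assms by (simp add: of_nat_diff)
  have a2: "real l + real k + 1 = 2 * real l + real (k - l) + 1" using assms by (simp add: of_nat_diff)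
  have "hyp3F2 (real l - real k) (real l + real k + 1) y (real l + 1) (real l + 1 - real n) 1
     = (\<Sum>i<k - l + 2. pochhammer (real l - real k) i * pochhammer (real l + real k + 1) i * pochhammer y i
       / (pochhammer (real l + 1) i * pochhammer (real l + 1 - real n) i) * 1 ^ i / fact i)"
    unfolding hyp3F2_def
  proof (rule suminf_finite)
    fix i assume "i \<notin> {..<k - l + 2}"
    then have "k - l < i" by simp
    then show "pochhammer (real l - real k) i * pochhammer (real l + real k + 1) i * pochhammer y i
       / (pochhammer (real l + 1) i * pochhammer (real l + 1 - real n) i) * 1 ^ i / fact i = 0"
      unfolding a1 by (simp add: pochhammer_of_nat_eq_0_lemma)
  qed simp
  also have "\<dots> = Fs n l (k - l) y"
    unfolding Fs_def Acoef_def a1 a2 by (intro sum.cong refl) (simp add: divide_inverse ac_simps)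
  finally show ?thesis .
qed

lemma part3:
  assumes "l \<le> k" "k < n"
  shows "\<exists>c :: real. c \<noteq> 0 \<and>
          polyH n (fkl n k l) =
          (\<lambda>i j. c * funH n (\<lambda>x. hyp3F2 (real l - real k) (real l + real k + 1) ((1 - real n - x) / 2)
                                        (real l + 1) (real l + 1 - real n) 1) i j)"
proof -
  obtain c where c: "c \<noteq> 0" "\<And>x. poly (GG n k (k - l)) x = c * Fs n (k - (k - l)) (k - l) (x + real (k - (k - l)) + 1 - real n)"
    using GG_hyp[of "k - l" k n] assms by auto
  have kl: "k - (k - l) = l" using assms by simp
  have pf: "poly (fkl n k l) x = c * hyp3F2 (real l - real k) (real l + real k + 1) ((1 - real n - x) / 2)
                                        (real l + 1) (real l + 1 - real n) 1" for x
  proof -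
    have "poly (fkl n k l) x = c * Fs n l (k - l) ((real n - 2 * real l - 1) / 2 - x / 2 + real l + 1 - real n)"
      unfolding fkl_eq[OF assms] poly_fk c(2) kl ..
    also have "(real n - 2 * real l - 1) / 2 - x / 2 + real l + 1 - real n = (1 - real n - x) / 2"
      by (simp add: field_simps)
    finally show ?thesis unfolding hyp_Fs[OF assms(1)] .
  qed
  show ?thesis
    by (intro exI[of _ c]) (auto simp: c(1) polyH_def funH_def pf fun_eq_iff)
qed


theorem theorem8p1:
  fixes n :: nat
  assumes "1 \<le> n"
  shows
   \<comment> \<open>(i): basis of gl(n) and orthogonality\<close>
   "(\<forall>k l. k < n \<and> - int k \<le> l \<and> l \<le> int k \<longrightarrow> ekl n k l \<in> gl n)
  \<and> (\<forall>c :: nat \<times> int \<Rightarrow> real.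
       (\<lambda>i j. \<Sum>p\<in>{(k, l). k < n \<and> - int k \<le> l \<and> l \<le> int k}. c p * ekl n (fst p) (snd p) i j)
         = (\<lambda>i j. 0)
       \<longrightarrow> (\<forall>p\<in>{(k, l). k < n \<and> - int k \<le> l \<and> l \<le> int k}. c p = 0))
  \<and> (\<forall>A\<in>gl n. \<exists>c :: nat \<times> int \<Rightarrow> real.
       A = (\<lambda>i j. \<Sum>p\<in>{(k, l). k < n \<and> - int k \<le> l \<and> l \<le> int k}. c p * ekl n (fst p) (snd p) i j))
  \<and> (\<forall>k l k' l'. k < n \<and> - int k \<le> l \<and> l \<le> int k \<and> k' < n \<and> - int k' \<le> l' \<and> l' \<le> int k'
       \<and> \<not> (k = k' \<and> l + l' = 0) \<longrightarrow> trform n (ekl n k l) (ekl n k' l') = 0)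
   \<comment> \<open>(ii): orthogonal basis of polynomials of degree < n - l w.r.t. <_,_>_l\<close>
  \<and> (\<forall>l < n.
       (\<forall>k\<in>{l..<n}. degree (fkl n k l) < n - l)
     \<and> (\<forall>c :: nat \<Rightarrow> real. (\<Sum>k\<in>{l..<n}. smult (c k) (fkl n k l)) = 0
          \<longrightarrow> (\<forall>k\<in>{l..<n}. c k = 0))
     \<and> (\<forall>p :: real poly. degree p < n - l
          \<longrightarrow> (\<exists>c :: nat \<Rightarrow> real. p = (\<Sum>k\<in>{l..<n}. smult (c k) (fkl n k l))))
     \<and> (\<forall>k\<in>{l..<n}. \<forall>k'\<in>{l..<n}. k \<noteq> k' \<longrightarrow> lform n l (fkl n k l) (fkl n k' l) = 0))
   \<comment> \<open>(iii): hypergeometric expression up to a nonzero constant\<close>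
  \<and> (\<forall>k l. l \<le> k \<and> k < n \<longrightarrow>
       (\<exists>c :: real. c \<noteq> 0 \<and>
          polyH n (fkl n k l) =
          (\<lambda>i j. c * funH n (\<lambda>x. hyp3F2 (real l - real k) (real l + real k + 1) ((1 - real n - x) / 2)
                                        (real l + 1) (real l + 1 - real n) 1) i j)))"
  proof -
  have fam: "\<forall>k\<in>{l..<n}. fkl n k l \<noteq> 0 \<and> degree (fkl n k l) = k - l" if "l < n" for l
    using fkl_eq fk_deg by auto
  show ?thesis
    unfolding Sidx_def[symmetric]
  proof (intro conjI allI impI ballI)
    fix k and l :: int
    assume "k < n \<and> - int k \<le> l \<and> l \<le> int k"
    then show "ekl n k l \<in> gl n" by (simp add: ekl_eq matof_gl)
  next
    fix c :: "nat \<times> int \<Rightarrow> real" and p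
    assume "(\<lambda>i j. \<Sum>p\<in>Sidx n. c p * ekl n (fst p) (snd p) i j) = (\<lambda>i j. 0)" "p \<in> Sidx n"
    then show "c p = 0" by (rule basis_indep)
  next
    fix A assume "A \<in> gl n"
    then show "\<exists>c. A = (\<lambda>i j. \<Sum>p\<in>Sidx n. c p * ekl n (fst p) (snd p) i j)" by (rule basis_span)
  next
    fix k k' :: nat and l l' :: int
    assume "k < n \<and> - int k \<le> l \<and> l \<le> int k \<and> k' < n \<and> - int k' \<le> l' \<and> l' \<le> int k' \<and> \<not> (k = k' \<and> l + l' = 0)"
    then show "trform n (ekl n k l) (ekl n k' l') = 0" by (intro trform_ekl) auto
  next
    fix l k assume "l < n" "k \<in> {l..<n}"
    then show "degree (fkl n k l) < n - l" using fam by auto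
  next
    fix l :: nat and c :: "nat \<Rightarrow> real" and k
    assume "l < n" "(\<Sum>k\<in>{l..<n}. smult (c k) (fkl n k l)) = 0" "k \<in> {l..<n}"
    then show "c k = 0" using indep_deg[OF fam] by blast
  next
    fix l :: nat and p :: "real poly"
    assume "l < n" "degree p < n - l"
    then show "\<exists>c. p = (\<Sum>k\<in>{l..<n}. smult (c k) (fkl n k l))" using span_deg[OF fam] by blast
  next
    fix l k k' assume "l < n" "k \<in> {l..<n}" "k' \<in> {l..<n}" "k \<noteq> k'"
    then show "lform n l (fkl n k l) (fkl n k' l) = 0" by (intro lform_orth) auto
  next
    fix k l :: nat assume "l \<le> k \<and> k < n"
    then show "\<exists>c. c \<noteq> 0 \<and> polyH n (fkl n k l) = (\<lambda>i j. c * funH n (\<lambda>x. hyp3F2 (real l - real k) (real l + real k + 1) ((1 - real n - x) / 2)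
                                        (real l + 1) (real l + 1 - real n) 1) i j)"
      by (intro part3) auto
  qed
qed

end
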